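(* Assume the setting of the previous statements: $C\subseteq\mathbb{R}^n$ nonempty closed convex; $F$ continuously differentiable; $x^*$ a solution of VIP$(F,C)$; a neighborhood $X$ of $x^*$ and constants $L_1,L_2,\mu>0$ with $\|F(x)-F(y)\|\le L_1\|x-y\|$, $\|\nabla F(x)-\nabla F(y)\|\le L_2\|x-y\|$ for $x,y\in X$ and $\langle\nabla F(x)d,d\rangle\ge\mu\|d\|^2$ for $x\in X$, $d\in\mathbb{R}^n$; sequences $\{x_k\}\subset C$ with $x_k\to x^*$, $B_k$, $\mu_k>0$, $\rho_k\ge0$, $\delta_k>0$, inexact solutions $z_k\in C$ and exact solutions $\hat z_k$ of VIP$(\varphi_k,C)$; constants $D,C_1,C_2>0$ such that for all sufficiently large $k$: $\|B_k-\nabla F(x_k)\|\le D$; $\mu_k=O(r_k)$, $\mu_k\le C_1\|x_k-x^*\|$, $\rho_k\to0$; $B_k+\mu_kI$ positive definite with $(1+\|B_k+\mu_kI\|)/c_k\le C_2$; $\|(B_k-\nabla F(x_k))(z_k-x_k)\|\le\delta_k\|z_k-x_k\|$, $\mu_k<\mu/2$, $\delta_k\le\mu/16$. Assume moreover that $F$ is strongly monotone on $C$ with modulus $\mu$ and that $0<\alpha<2\mu$, and let $\gamma\in(0,1)$. Then there exist a constant $\delta$ with $0<\delta<\mu/16$ and a neighborhood $X'$ of $x^*$ such that for all sufficiently large $k$ with $x_k\in X'$ and $\delta_k\le\delta$, one has $f_\alpha(z_k)\le\gamma f_\alpha(x_k)$.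
   Context: VIP$(F,C)$: find $x^*\in C$ with $\langle F(x^* ),x-x^*\rangle\ge0$ for all $x\in C$. $P_C$ is the Euclidean projection onto $C$. $r_k=\|x_k-P_C(x_k-F(x_k))\|$. $F$ is strongly monotone on $C$ with modulus $\mu$ if $\langle F(x)-F(y),x-y\rangle\ge\mu\|x-y\|^2$ for all $x,y\in C$. For $\alpha>0$ the merit function is $f_\alpha(x)=\max_{y\in C}\{-\langle F(x),y-x\rangle-\tfrac{\alpha}{2}\|y-x\|^2\}$. For each $k$, $\varphi_k(z)=F(x_k)+(B_k+\mu_kI)(z-x_k)$; $\hat z_k\in C$ is the unique solution of VIP$(\varphi_k,C)$: $\langle\varphi_k(\hat z_k),x-\hat z_k\rangle\ge0$ for all $x\in C$. With $e_k=z_k-P_C(z_k-\varphi_k(z_k))$, the inexact solutions $z_k\in C$ satisfy $\|e_k\|\le\rho_k\mu_k\|z_k-x_k\|$ and $\langle e_k,\varphi_k(z_k)+z_k-x_k\rangle\le\rho_k\mu_k\|z_k-x_k\|^2$. $c_k$ is the smallest eigenvalue of the symmetric part of $B_k+\mu_kI$. *)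

theory Defs
  imports "HOL-Analysis.Analysis" "HOL-Library.Landau_Symbols"
begin

definition vip_sol :: "(real^'n \<Rightarrow> real^'n) \<Rightarrow> (real^'n) set \<Rightarrow> real^'n \<Rightarrow> bool" where
  "vip_sol F C x \<longleftrightarrow> x \<in> C \<and> (\<forall>y\<in>C. F x \<bullet> (y - x) \<ge> 0)"

abbreviation proj :: "(real^'n) set \<Rightarrow> real^'n \<Rightarrow> real^'n" where
  "proj C x \<equiv> closest_point C x"

definition resid :: "(real^'n \<Rightarrow> real^'n) \<Rightarrow> (real^'n) set \<Rightarrow> real^'n \<Rightarrow> real" where
  "resid F C x = norm (x - proj C (x - F x))"

definition strongly_monotone_on ::
  "(real^'n) set \<Rightarrow> (real^'n \<Rightarrow> real^'n) \<Rightarrow> real \<Rightarrow> bool" where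
  "strongly_monotone_on C F m \<longleftrightarrow>
     (\<forall>x\<in>C. \<forall>y\<in>C. (F x - F y) \<bullet> (x - y) \<ge> m * (norm (x - y))\<^sup>2)"

definition merit :: "real \<Rightarrow> (real^'n \<Rightarrow> real^'n) \<Rightarrow> (real^'n) set \<Rightarrow> real^'n \<Rightarrow> real" where
  "merit \<alpha> F C x = (SUP y\<in>C. - (F x \<bullet> (y - x)) - \<alpha> / 2 * (norm (y - x))\<^sup>2)"

definition mnorm :: "real^'n^'n \<Rightarrow> real" where
  "mnorm A = onorm (\<lambda>h. A *v h)"

definition pos_def :: "real^'n^'n \<Rightarrow> bool" where
  "pos_def A \<longleftrightarrow> (\<forall>v. v \<noteq> 0 \<longrightarrow> (A *v v) \<bullet> v > 0)"

definition sym_part :: "real^'n^'n \<Rightarrow> real^'n^'n" where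
  "sym_part A = (1/2) *\<^sub>R (A + transpose A)"

definition min_eig :: "real^'n^'n \<Rightarrow> real" where
  "min_eig S = Min {l. \<exists>v. v \<noteq> 0 \<and> S *v v = l *\<^sub>R v}"

definition lin_map ::
  "(real^'n \<Rightarrow> real^'n) \<Rightarrow> real^'n \<Rightarrow> real^'n^'n \<Rightarrow> real \<Rightarrow> real^'n \<Rightarrow> real^'n" where
  "lin_map F xk Bk muk z = F xk + (Bk + muk *\<^sub>R mat 1) *v (z - xk)"

end

theory Submission
  imports Defs
begin


lemma mnorm_bound: "norm (A *v h) \<le> mnorm A * norm (h::real^'n)"
  unfolding mnorm_def by (rule onorm) simp

lemma mnorm_nonneg: "0 \<le> mnorm (A::real^'n^'n)"
  unfolding mnorm_def by (rule onorm_pos_le) simp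

lemma G_apply: "(B + m *\<^sub>R mat 1) *v (d::real^'n) = B *v d + m *\<^sub>R d"
  by (simp add: matrix_vector_mult_add_rdistrib scaleR_matrix_vector_assoc[symmetric])

lemma scal_bound: fixes a t al :: real assumes "al > 0"
  shows "a * t - al / 2 * t^2 \<le> a^2 / (2*al)"
proof -
  have "0 \<le> (a - al*t)^2 / (2*al)" using assms by simp
  also have "\<dots> = a^2/(2*al) - (a*t - al/2*t^2)" using assms
    by (simp add: field_simps power2_eq_square)
  finally show ?thesis by simp
qed

lemma quad_lemma: fixes c t s P Q :: real
  assumes c: "c > 0" and t: "t \<ge> 0" and s: "s \<ge> 0" and P: "P \<ge> 0" and Q: "Q \<ge> 0"
    and h: "c * t^2 \<le> P * t * s + Q * s^2"
  shows "t \<le> max 1 ((P+Q)/c) * s"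
proof (cases "t \<le> s")
  case True
  have "1 * s \<le> max 1 ((P+Q)/c) * s" using s by (intro mult_right_mono) auto
  then show ?thesis using True by linarith
next
  case False
  have "Q * (s * s) \<le> Q * (t * s)" using False s t Q
    by (intro mult_left_mono mult_right_mono) auto
  then have "c * (t * t) \<le> P * t * s + Q * (t * s)" using h by (simp add: power2_eq_square)
  also have "\<dots> = ((P+Q) * s) * t" by (simp add: algebra_simps)
  finally have "c * t * t \<le> ((P+Q) * s) * t" by (simp add: mult.assoc)
  then have "c * t \<le> (P+Q) * s" using False s by (simp add: mult_le_cancel_right)
  then have "t \<le> (P+Q)/c * s" using c by (simp add: field_simps)
  moreover have "(P+Q)/c * s \<le> max 1 ((P+Q)/c) * s" using s by (intro mult_right_mono) auto
  ultimately show ?thesis by linarith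
qed

lemma merit_upper:
  assumes "C \<noteq> {}" "\<And>y. y \<in> C \<Longrightarrow> - (F z \<bullet> (y - z)) - \<alpha> / 2 * (norm (y - z))\<^sup>2 \<le> b"
  shows "merit \<alpha> F C z \<le> b"
  unfolding merit_def using assms by (intro cSUP_least) auto

lemma merit_lower:
  assumes "y \<in> C" "\<alpha> > 0"
  shows "- (F x \<bullet> (y - x)) - \<alpha> / 2 * (norm (y - x))\<^sup>2 \<le> merit \<alpha> F C x"
  unfolding merit_def
proof (rule cSUP_upper[OF assms(1)])
  have hb: "- (F x \<bullet> (y - x)) - \<alpha> / 2 * (norm (y - x))\<^sup>2 \<le> (norm (F x))^2/(2*\<alpha>)" for y
  proof -
    have "- (F x \<bullet> (y - x)) \<le> norm (F x) * norm (y-x)"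
      by (metis Cauchy_Schwarz_ineq2 abs_le_iff inner_minus_left)
    then show ?thesis using scal_bound[OF assms(2), of "norm (F x)" "norm (y-x)"] by linarith
  qed
  show "bdd_above ((\<lambda>y. - (F x \<bullet> (y - x)) - \<alpha> / 2 * (norm (y - x))\<^sup>2) ` C)"
    by (rule bdd_aboveI2, rule hb)
qed



lemma key_d:
  fixes x z e xs Fx Fxs Gd :: "real^'n"
  assumes h: "(Fx - Fxs + Gd - e) \<bullet> (e - (x - xs) - (z - x)) \<ge> 0"
    and coerc: "Gd \<bullet> (z - x) \<ge> c * (norm (z - x))^2"
    and Gn: "norm Gd \<le> M * norm (z - x)"
    and en: "norm e \<le> \<eta> * norm (z - x)"
    and Fl: "norm (Fx - Fxs) \<le> L * norm (x - xs)"
    and p: "\<eta> \<ge> 0" "\<eta> \<le> 1" "(M + 2) * \<eta> \<le> c / 2" "c > 0" "M \<ge> 0" "L \<ge> 0"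
  shows "norm (z - x) \<le> max 1 ((M + 2*L + 1 + L) / (c/2)) * norm (x - xs)"
proof -
  define t where "t = norm (z - x)"
  define s where "s = norm (x - xs)"
  define P where "P = Fx - Fxs - e"
  have t0: "t \<ge> 0" and s0: "s \<ge> 0" by (auto simp: t_def s_def)
  have en': "norm e \<le> \<eta> * t" using en t_def by simp
  have "0 \<le> P \<bullet> (e - (x - xs) - (z - x)) + Gd \<bullet> (e - (x - xs)) - Gd \<bullet> (z - x)"
    using h unfolding P_def by (simp add: inner_diff_right inner_add_left algebra_simps)
  moreover have "Gd \<bullet> (e - (x - xs)) \<le> M * t * (\<eta> * t + s)"
  proof -
    have "Gd \<bullet> (e - (x - xs)) \<le> norm Gd * norm (e - (x - xs))" by (rule Cauchy_Schwarz_ineq2[THEN abs_le_D1])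
    also have "\<dots> \<le> (M * t) * (\<eta> * t + s)"
      apply (rule mult_mono)
      using Gn en' t_def s_def norm_triangle_ineq4[of e "x - xs"] p by auto
    finally show ?thesis by simp
  qed
  moreover have "P \<bullet> (e - (x - xs) - (z - x)) \<le> (L * s + \<eta> * t) * (\<eta> * t + s + t)"
  proof -
    have "P \<bullet> (e - (x - xs) - (z - x)) \<le> norm P * norm (e - (x - xs) - (z - x))" by (rule Cauchy_Schwarz_ineq2[THEN abs_le_D1])
    also have "\<dots> \<le> (L * s + \<eta> * t) * (\<eta> * t + s + t)"
    proof (rule mult_mono)
      show "norm P \<le> L * s + \<eta> * t" unfolding P_def using Fl en' s_def norm_triangle_ineq4[of "Fx - Fxs" e] by auto
      show "norm (e - (x - xs) - (z - x)) \<le> \<eta> * t + s + t"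
        using en' s_def t_def norm_triangle_ineq4[of "e - (x - xs)" "z - x"] norm_triangle_ineq4[of e "x - xs"] by auto
    qed (use p t0 s0 in auto)
    finally show ?thesis by simp
  qed
  moreover have "c * t^2 \<le> Gd \<bullet> (z - x)" using coerc by (simp add: t_def)
  ultimately have A: "c * t^2 \<le> M * t * (\<eta> * t + s) + (L * s + \<eta> * t) * (\<eta> * t + s + t)"
    by linarith
  have e2: "\<eta> * \<eta> * (t * t) \<le> 1 * \<eta> * (t * t)"
    by (rule mult_right_mono, rule mult_right_mono) (use p t0 in auto)
  have e3: "L * s * t * \<eta> \<le> L * s * t * 1"
    by (rule mult_left_mono) (use p t0 s0 in auto)
  have e4: "t * s * \<eta> \<le> t * s * 1"
    by (rule mult_left_mono) (use p t0 s0 in auto)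
  have expand: "M * t * (\<eta> * t + s) + (L * s + \<eta> * t) * (\<eta> * t + s + t)
     = (M + 1) * \<eta> * (t * t) + \<eta> * \<eta> * (t * t) + M * t * s + L * s * t * \<eta> + L * (s * s) + L * s * t + t * s * \<eta>"
    by (simp add: algebra_simps)
  have r1: "(M + 2) * \<eta> * (t * t) = (M + 1) * \<eta> * (t * t) + 1 * \<eta> * (t * t)"
    by (simp add: algebra_simps)
  have r2: "(M + 2*L + 1) * t * s = M * t * s + L * s * t * 1 + L * s * t + t * s * 1"
    by (simp add: algebra_simps)
  have "c * (t * t) \<le> (M + 2) * \<eta> * (t * t) + (M + 2*L + 1) * t * s + L * (s * s)"
    using A e2 e3 e4 unfolding expand power2_eq_square r1 r2 by linarith
  then have "c * t^2 \<le> (M + 2) * \<eta> * t^2 + (M + 2*L + 1) * t * s + L * s^2"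
    by (simp add: power2_eq_square)
  moreover have "(M + 2) * \<eta> * t^2 \<le> c/2 * t^2" using p by (intro mult_right_mono) auto
  ultimately have "c/2 * t^2 \<le> (M + 2*L + 1) * t * s + L * s^2" by linarith
  from quad_lemma[OF _ t0 s0 _ _ this] p show ?thesis unfolding t_def s_def by simp
qed

lemma merit_z_bound:
  fixes z e Fz phi q :: "real^'n"
  assumes proj: "\<And>y. y \<in> C \<Longrightarrow> (e - phi) \<bullet> (y - (z - e)) \<le> 0"
    and q: "q = Fz - phi + e" and al: "\<alpha> > 0" and y: "y \<in> C"
  shows "- (Fz \<bullet> (y - z)) - \<alpha> / 2 * (norm (y - z))\<^sup>2 \<le> (norm Fz + norm q) * norm e + (norm q)^2 / (2*\<alpha>)"
proof -
  have i: "- (Fz \<bullet> (y - z)) = Fz \<bullet> e - q \<bullet> e + q \<bullet> (z - y) + (phi - e) \<bullet> ((z - e) - y)"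
    unfolding q by (simp add: inner_diff_right inner_diff_left inner_add_left algebra_simps)
  have "(phi - e) \<bullet> ((z - e) - y) \<le> 0" using proj[OF y]
    by (metis inner_minus_left inner_minus_right minus_diff_eq neg_le_0_iff_le)
  moreover have "Fz \<bullet> e \<le> norm Fz * norm e" by (rule Cauchy_Schwarz_ineq2[THEN abs_le_D1])
  moreover have "- (q \<bullet> e) \<le> norm q * norm e" using Cauchy_Schwarz_ineq2[of q e] by linarith
  moreover have "q \<bullet> (z - y) \<le> norm q * norm (y - z)"
    using Cauchy_Schwarz_ineq2[of q "z - y"] by (simp add: norm_minus_commute)
  ultimately have "- (Fz \<bullet> (y - z)) \<le> (norm Fz + norm q) * norm e + norm q * norm (y - z)"
    unfolding i by (simp add: algebra_simps)
  then show ?thesis using scal_bound[OF al, of "norm q" "norm (y - z)"] by linarith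
qed



lemma tri4: "norm (a - b - c + e) \<le> norm a + norm b + norm c + norm (e::real^'n)"
proof -
  have "norm (a - b - c + e) \<le> norm (a - b - c) + norm e" by (rule norm_triangle_ineq)
  moreover have "norm (a - b - c) \<le> norm (a - b) + norm c" by (rule norm_triangle_ineq4)
  moreover have "norm (a - b) \<le> norm a + norm b" by (rule norm_triangle_ineq4)
  ultimately show ?thesis by linarith
qed

theorem mainTheorem6:
  fixes C :: "(real^'n) set"
    and F :: "real^'n \<Rightarrow> real^'n"
    and JF :: "real^'n \<Rightarrow> real^'n^'n"
    and xstar :: "real^'n"
    and X :: "(real^'n) set"
    and L1 L2 \<mu> D C1 C2 \<alpha> \<gamma> :: real
    and x z zhat :: "nat \<Rightarrow> real^'n"
    and B :: "nat \<Rightarrow> real^'n^'n"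
    and mu rho dlt :: "nat \<Rightarrow> real"
  assumes C_ne: "C \<noteq> {}" and C_closed: "closed C" and C_convex: "convex C"
    and F_deriv: "\<And>x. (F has_derivative (\<lambda>h. JF x *v h)) (at x)"
    and JF_cont: "continuous_on UNIV JF"
    and sol: "vip_sol F C xstar"
    and X_open: "open X" and X_xstar: "xstar \<in> X"
    and L1_pos: "L1 > 0" and L2_pos: "L2 > 0" and mu_pos: "\<mu> > 0"
    and F_lip: "\<And>x y. x \<in> X \<Longrightarrow> y \<in> X \<Longrightarrow> norm (F x - F y) \<le> L1 * norm (x - y)"
    and JF_lip: "\<And>x y. x \<in> X \<Longrightarrow> y \<in> X \<Longrightarrow> mnorm (JF x - JF y) \<le> L2 * norm (x - y)"
    and JF_coerc: "\<And>x d. x \<in> X \<Longrightarrow> (JF x *v d) \<bullet> d \<ge> \<mu> * (norm d)\<^sup>2"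
    and x_in_C: "\<And>k. x k \<in> C"
    and x_lim: "x \<longlonglongrightarrow> xstar"
    and muk_pos: "\<And>k. mu k > 0"
    and rho_nonneg: "\<And>k. rho k \<ge> 0"
    and dlt_pos: "\<And>k. dlt k > 0"
    and z_in_C: "\<And>k. z k \<in> C"
    and z_inexact1: "\<And>k. norm (z k - proj C (z k - lin_map F (x k) (B k) (mu k) (z k)))
                        \<le> rho k * mu k * norm (z k - x k)"
    and z_inexact2: "\<And>k. (z k - proj C (z k - lin_map F (x k) (B k) (mu k) (z k)))
                        \<bullet> (lin_map F (x k) (B k) (mu k) (z k) + z k - x k)
                        \<le> rho k * mu k * (norm (z k - x k))\<^sup>2"
    and zhat_sol: "\<And>k. vip_sol (lin_map F (x k) (B k) (mu k)) C (zhat k)"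
    and D_pos: "D > 0" and C1_pos: "C1 > 0" and C2_pos: "C2 > 0"
    and mu_bigO: "mu \<in> O(\<lambda>k. resid F C (x k))"
    and rho_lim: "rho \<longlonglongrightarrow> 0"
    and eventually_conds: "\<exists>K. \<forall>k\<ge>K.
          mnorm (B k - JF (x k)) \<le> D
        \<and> mu k \<le> C1 * norm (x k - xstar)
        \<and> pos_def (B k + mu k *\<^sub>R mat 1)
        \<and> (1 + mnorm (B k + mu k *\<^sub>R mat 1)) / min_eig (sym_part (B k + mu k *\<^sub>R mat 1)) \<le> C2
        \<and> norm ((B k - JF (x k)) *v (z k - x k)) \<le> dlt k * norm (z k - x k)
        \<and> mu k < \<mu> / 2
        \<and> dlt k \<le> \<mu> / 16"
    and F_smon: "strongly_monotone_on C F \<mu>"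
    and alpha_pos: "0 < \<alpha>" and alpha_lt: "\<alpha> < 2 * \<mu>"
    and gamma_pos: "0 < \<gamma>" and gamma_lt1: "\<gamma> < 1"
  shows "\<exists>\<delta>. 0 < \<delta> \<and> \<delta> < \<mu> / 16 \<and>
           (\<exists>X'. open X' \<and> xstar \<in> X' \<and>
              (\<exists>K. \<forall>k\<ge>K. x k \<in> X' \<and> dlt k \<le> \<delta> \<longrightarrow>
                   merit \<alpha> F C (z k) \<le> \<gamma> * merit \<alpha> F C (x k)))"
proof -
  obtain R where R0: "R > 0" and RX: "ball xstar R \<subseteq> X"
    using X_open X_xstar open_contains_ball by blast
  obtain K1 where K1: "\<forall>k\<ge>K1.
          mnorm (B k - JF (x k)) \<le> D
        \<and> mu k \<le> C1 * norm (x k - xstar)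
        \<and> pos_def (B k + mu k *\<^sub>R mat 1)
        \<and> (1 + mnorm (B k + mu k *\<^sub>R mat 1)) / min_eig (sym_part (B k + mu k *\<^sub>R mat 1)) \<le> C2
        \<and> norm ((B k - JF (x k)) *v (z k - x k)) \<le> dlt k * norm (z k - x k)
        \<and> mu k < \<mu> / 2
        \<and> dlt k \<le> \<mu> / 16" using eventually_conds by (elim exE) assumption
  define J0 where "J0 = mnorm (JF xstar)"
  define M where "M = J0 + L2*R + \<mu>/16 + \<mu>/2"
  define c where "c = 15/16*\<mu>"
  define \<eta>0 where "\<eta>0 = min 1 (c/(2*(M+2)))"
  define KK where "KK = max 1 ((M + 2*L1 + 1 + L1) / (c/2))"
  define Fm where "Fm = norm (F xstar) + L1*(KK+1)*R"
  define \<beta> where "\<beta> = \<gamma>*(\<mu> - \<alpha>/2)"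
  define \<epsilon>0 where "\<epsilon>0 = sqrt (\<alpha>*\<beta>)"
  define A where "A = L2*KK + 2*C1"
  define \<delta> where "\<delta> = min (\<mu>/32) (\<epsilon>0/(2*KK))"
  define r where "r = min (R/(KK+1)) (\<epsilon>0/(2*A*KK))"
  define \<rho>1 where "\<rho>1 = \<beta>/(2*(Fm + \<epsilon>0*R)*C1*KK)"
  define \<rho>s where "\<rho>s = min 1 (min (2*\<eta>0/\<mu>) \<rho>1)"
  have J0: "J0 \<ge> 0" unfolding J0_def by (rule mnorm_nonneg)
  have M0: "M \<ge> 0" unfolding M_def using J0 L2_pos R0 mu_pos by simp
  have c0: "c > 0" unfolding c_def using mu_pos by simp
  have \<eta>00: "\<eta>0 > 0" unfolding \<eta>0_def using c0 M0 by simp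
  have \<eta>01: "\<eta>0 \<le> 1" unfolding \<eta>0_def by simp
  have \<eta>0M: "(M+2)*\<eta>0 \<le> c/2"
  proof -
    have "\<eta>0 \<le> c/(2*(M+2))" unfolding \<eta>0_def by simp
    then have "(M+2)*\<eta>0 \<le> (M+2)*(c/(2*(M+2)))" using M0 by (intro mult_left_mono) auto
    also have "\<dots> = c/2" using M0 by (simp add: field_simps)
    finally show ?thesis .
  qed
  have KK1: "KK \<ge> 1" unfolding KK_def by simp
  have \<beta>0: "\<beta> > 0" unfolding \<beta>_def using gamma_pos alpha_lt by simp
  have \<epsilon>00: "\<epsilon>0 > 0" unfolding \<epsilon>0_def using alpha_pos \<beta>0 by simp
  have \<epsilon>0sq: "\<epsilon>0^2 = \<alpha>*\<beta>" unfolding \<epsilon>0_def using alpha_pos \<beta>0 by simp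
  have A0: "A > 0" unfolding A_def using L2_pos C1_pos KK1 by (simp add: add_pos_pos)
  have Fm0: "Fm \<ge> 0" unfolding Fm_def using L1_pos KK1 R0 by simp
  have \<delta>0: "\<delta> > 0" unfolding \<delta>_def using mu_pos \<epsilon>00 KK1 by simp
  have \<delta>1: "\<delta> < \<mu>/16" unfolding \<delta>_def using mu_pos by simp
  have \<delta>KK: "\<delta>*KK \<le> \<epsilon>0/2"
  proof -
    have "\<delta> \<le> \<epsilon>0/(2*KK)" unfolding \<delta>_def by simp
    then have "\<delta>*KK \<le> \<epsilon>0/(2*KK)*KK" using KK1 by (intro mult_right_mono) auto
    also have "\<dots> = \<epsilon>0/2" using KK1 by (simp add: field_simps)
    finally show ?thesis .
  qed
  have r0: "r > 0" unfolding r_def using R0 KK1 \<epsilon>00 A0 by simp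
  have rR: "r*(KK+1) \<le> R"
  proof -
    have "r \<le> R/(KK+1)" unfolding r_def by simp
    then have "r*(KK+1) \<le> R/(KK+1)*(KK+1)" using KK1 by (intro mult_right_mono) auto
    also have "\<dots> = R" using KK1 by (simp add: field_simps)
    finally show ?thesis .
  qed
  have rA: "A*r*KK \<le> \<epsilon>0/2"
  proof -
    have "r \<le> \<epsilon>0/(2*A*KK)" unfolding r_def by simp
    then have "A*KK*r \<le> A*KK*(\<epsilon>0/(2*A*KK))" using KK1 A0 by (intro mult_left_mono) auto
    also have "\<dots> = \<epsilon>0/2" using KK1 A0 by (simp add: field_simps)
    finally show ?thesis by (simp add: mult_ac)
  qed
  have FeR: "Fm + \<epsilon>0*R > 0" using Fm0 \<epsilon>00 R0 by (simp add: add_nonneg_pos)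
  have \<rho>10: "\<rho>1 > 0" unfolding \<rho>1_def using \<beta>0 FeR C1_pos KK1
    by (intro divide_pos_pos mult_pos_pos) auto
  have \<rho>s0: "\<rho>s > 0" unfolding \<rho>s_def using \<rho>10 \<eta>00 mu_pos by simp
  have "eventually (\<lambda>k. rho k < \<rho>s) sequentially"
    using order_tendstoD(2)[OF rho_lim \<rho>s0] .
  then obtain N where N: "\<And>k. k \<ge> N \<Longrightarrow> rho k < \<rho>s" by (auto simp: eventually_sequentially)
  show ?thesis
  proof (intro exI conjI)
    show "0 < \<delta>" "\<delta> < \<mu>/16" by (rule \<delta>0, rule \<delta>1)
    show "open (ball xstar r)" by simp
    show "xstar \<in> ball xstar r" using r0 by simp
    show "\<forall>k\<ge>max K1 N. x k \<in> ball xstar r \<and> dlt k \<le> \<delta> \<longrightarrow>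
                   merit \<alpha> F C (z k) \<le> \<gamma> * merit \<alpha> F C (x k)"
    proof (intro allI impI)
      fix k assume k: "k \<ge> max K1 N" and hk: "x k \<in> ball xstar r \<and> dlt k \<le> \<delta>"
      have kK1: "k \<ge> K1" and kN: "k \<ge> N" using k by auto
      define xk where "xk = x k"
      define zk where "zk = z k"
      define d where "d = zk - xk"
      define v where "v = xk - xstar"
      define s where "s = norm v"
      define t where "t = norm d"
      define phi where "phi = lin_map F xk (B k) (mu k) zk"
      define e where "e = zk - proj C (zk - phi)"
      define Gd where "Gd = (B k + mu k *\<^sub>R mat 1) *v d"
      have s0: "s \<ge> 0" and t0: "t \<ge> 0" by (auto simp: s_def t_def)
      have muC1: "mu k \<le> C1 * s" using K1 kK1 by (simp add: s_def v_def xk_def)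
      have dlt_d: "norm ((B k - JF xk) *v d) \<le> dlt k * t" using K1 kK1
        by (simp add: t_def d_def xk_def zk_def)
      have mu2: "mu k < \<mu>/2" and dlt16: "dlt k \<le> \<mu>/16" using K1 kK1 by auto
      have dltd: "dlt k \<le> \<delta>" using hk by simp
      have sr: "s < r" using hk by (simp add: s_def v_def xk_def dist_norm norm_minus_commute)
      have rho_s: "rho k < \<rho>s" using N kN by simp
      have rho1: "rho k \<le> 1" and rho_eta: "rho k \<le> 2*\<eta>0/\<mu>" and rho_r1: "rho k \<le> \<rho>1"
        using rho_s unfolding \<rho>s_def by auto
      have rho0: "rho k \<ge> 0" by (rule rho_nonneg)
      have mu0: "mu k > 0" by (rule muk_pos)
      have sR: "s < R"
      proof -
        have "r \<le> r*(KK+1)" using r0 KK1 by simp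
        then show ?thesis using sr rR by linarith
      qed
      have xkX: "xk \<in> X" using sR RX by (auto simp: s_def v_def dist_norm norm_minus_commute)
      have xkC: "xk \<in> C" unfolding xk_def by (rule x_in_C)
      have Gd_eq: "Gd = JF xk *v d + (B k - JF xk) *v d + mu k *\<^sub>R d"
        unfolding Gd_def G_apply by (simp add: matrix_vector_mult_diff_rdistrib)
      have phi_eq: "phi = F xk + Gd" unfolding phi_def lin_map_def Gd_def d_def by simp
      have wC: "zk - e \<in> C" unfolding e_def using closest_point_in_set[OF C_closed C_ne] by simp
      have proj: "\<And>y. y \<in> C \<Longrightarrow> (e - phi) \<bullet> (y - (zk - e)) \<le> 0"
      proof -
        fix y assume "y \<in> C"
        from closest_point_dot[OF C_convex C_closed this, of "zk - phi"]
        show "(e - phi) \<bullet> (y - (zk - e)) \<le> 0" unfolding e_def by (simp add: algebra_simps)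
      qed
      have solx: "F xstar \<bullet> (zk - e - xstar) \<ge> 0" using sol wC unfolding vip_sol_def by blast
      have xsC: "xstar \<in> C" using sol unfolding vip_sol_def by blast
      have h: "(F xk - F xstar + Gd - e) \<bullet> (e - (xk - xstar) - (zk - xk)) \<ge> 0"
      proof -
        have "(e - phi) \<bullet> (xstar - (zk - e)) \<le> 0" using proj[OF xsC] .
        moreover have "xstar - (zk - e) = e - (xk - xstar) - (zk - xk)" by (simp add: algebra_simps)
        moreover have "zk - e - xstar = - (e - (xk - xstar) - (zk - xk))" by (simp add: algebra_simps)
        ultimately show ?thesis using solx unfolding phi_eq
          by (simp add: inner_diff_left inner_add_left inner_minus_right algebra_simps)
      qed
      have coerc: "Gd \<bullet> (zk - xk) \<ge> c * (norm (zk - xk))^2"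
      proof -
        have a1: "(JF xk *v d) \<bullet> d \<ge> \<mu> * t^2" using JF_coerc[OF xkX] t_def by simp
        have a2: "((B k - JF xk) *v d) \<bullet> d \<ge> - (dlt k * t^2)"
        proof -
          have "\<bar>((B k - JF xk) *v d) \<bullet> d\<bar> \<le> norm ((B k - JF xk) *v d) * t"
            unfolding t_def by (rule Cauchy_Schwarz_ineq2)
          also have "\<dots> \<le> (dlt k * t) * t" using dlt_d t0 by (rule mult_right_mono)
          also have "\<dots> = dlt k * t^2" by (simp add: power2_eq_square)
          finally show ?thesis by (simp add: abs_le_iff)
        qed
        have a3: "(mu k *\<^sub>R d) \<bullet> d = mu k * t^2" by (simp add: t_def power2_norm_eq_inner)
        have gsplit: "Gd \<bullet> d = (JF xk *v d) \<bullet> d + ((B k - JF xk) *v d) \<bullet> d + (mu k *\<^sub>R d) \<bullet> d"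
          unfolding Gd_eq by (simp only: inner_add_left)
        have "Gd \<bullet> d \<ge> \<mu> * t^2 - dlt k * t^2 + mu k * t^2"
          using a1 a2 a3 gsplit by linarith
        moreover have "dlt k * t^2 \<le> \<mu>/16 * t^2" using dlt16 by (intro mult_right_mono) auto
        moreover have "mu k * t^2 \<ge> 0" using mu0 by simp
        ultimately have "Gd \<bullet> d \<ge> c * t^2" unfolding c_def by linarith
        then show ?thesis by (simp add: d_def t_def)
      qed
      have Gn: "norm Gd \<le> M * norm (zk - xk)"
      proof -
        have "norm (JF xk *v d) \<le> norm (JF xstar *v d) + norm ((JF xk - JF xstar) *v d)"
          by (metis add_diff_cancel_left' matrix_vector_mult_diff_rdistrib norm_triangle_ineq4 norm_triangle_sub)
        also have "\<dots> \<le> J0 * t + (L2 * s) * t"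
        proof (rule add_mono)
          show "norm (JF xstar *v d) \<le> J0 * t" unfolding J0_def t_def by (rule mnorm_bound)
          have "norm ((JF xk - JF xstar) *v d) \<le> mnorm (JF xk - JF xstar) * t"
            unfolding t_def by (rule mnorm_bound)
          also have "\<dots> \<le> (L2 * s) * t" using JF_lip[OF xkX X_xstar] t0 unfolding s_def v_def
            by (rule mult_right_mono)
          finally show "norm ((JF xk - JF xstar) *v d) \<le> (L2 * s) * t" .
        qed
        finally have b1: "norm (JF xk *v d) \<le> J0 * t + (L2 * s) * t" .
        have b2: "(L2 * s) * t \<le> (L2 * R) * t" using sR L2_pos t0 by (intro mult_right_mono) auto
        have b3: "norm (mu k *\<^sub>R d) \<le> \<mu>/2 * t"
        proof -
          have "norm (mu k *\<^sub>R d) = mu k * t" using mu0 by (simp add: t_def)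
          also have "\<dots> \<le> \<mu>/2 * t" using mu2 t0 by (intro mult_right_mono) auto
          finally show ?thesis .
        qed
        have b4: "dlt k * t \<le> \<mu>/16 * t" using dlt16 t0 by (rule mult_right_mono)
        have "norm Gd \<le> norm (JF xk *v d) + norm ((B k - JF xk) *v d) + norm (mu k *\<^sub>R d)"
          unfolding Gd_eq by (meson norm_triangle_ineq order_trans add_mono order_refl)
        also have "\<dots> \<le> M * t" using b1 b2 b3 b4 dlt_d unfolding M_def by (simp add: algebra_simps)
        finally show ?thesis by (simp add: t_def d_def)
      qed
      have en: "norm e \<le> (rho k * mu k) * norm (zk - xk)"
        using z_inexact1[of k] unfolding e_def phi_def zk_def xk_def by simp
      have eta0: "rho k * mu k \<ge> 0" using rho0 mu0 by simp
      have eta1: "rho k * mu k \<le> \<eta>0"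
      proof -
        have "rho k * mu k \<le> (2*\<eta>0/\<mu>) * (\<mu>/2)" using rho_eta mu2 rho0 mu0
          by (intro mult_mono) auto
        also have "\<dots> = \<eta>0" using mu_pos by simp
        finally show ?thesis .
      qed
      have eta2: "(M + 2) * (rho k * mu k) \<le> c/2"
        using mult_left_mono[OF eta1, of "M+2"] M0 \<eta>0M by linarith
      have Fl: "norm (F xk - F xstar) \<le> L1 * norm (xk - xstar)" using F_lip[OF xkX X_xstar] .
      have tK: "t \<le> KK * s"
        using key_d[OF h coerc Gn en Fl eta0 _ eta2 c0 M0] eta1 \<eta>01 L1_pos
        unfolding KK_def t_def s_def d_def v_def by simp
      have zs: "norm (zk - xstar) \<le> (KK+1) * s"
      proof -
        have "norm (zk - xstar) \<le> t + s" unfolding t_def s_def d_def v_def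
          using norm_triangle_ineq[of "zk - xk" "xk - xstar"] by simp
        then show ?thesis using tK by (simp add: algebra_simps)
      qed
      have zsR: "norm (zk - xstar) < R"
      proof -
        have "(KK+1) * s < (KK+1) * r" using sr KK1 by simp
        then show ?thesis using zs rR by (simp add: mult.commute)
      qed
      have zkX: "zk \<in> X" using zsR RX by (auto simp: dist_norm norm_minus_commute)
      have taylor: "norm (F zk - F xk - JF xk *v d) \<le> t * (L2 * t)"
      proof -
        have seg: "closed_segment xk zk \<subseteq> ball xstar R"
          by (rule closed_segment_subset) (use sR zsR in \<open>auto simp: s_def v_def dist_norm norm_minus_commute\<close>)
        have "norm (F zk - F xk - (\<lambda>h. JF xk *v h) (zk - xk)) \<le> norm (zk - xk) * (L2 * t)"
        proof (rule differentiable_bound_linearization[where S="closed_segment xk zk" and f'="\<lambda>y h. JF y *v h"])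
          show "\<And>\<tau>. \<tau> \<in> {0..1} \<Longrightarrow> xk + \<tau> *\<^sub>R (zk - xk) \<in> closed_segment xk zk"
            by (auto simp: closed_segment_def algebra_simps intro!: exI)
          show "\<And>y. y \<in> closed_segment xk zk \<Longrightarrow> (F has_derivative (\<lambda>h. JF y *v h)) (at y within closed_segment xk zk)"
            using F_deriv has_derivative_at_withinI by blast
          show "xk \<in> closed_segment xk zk" by simp
          fix y assume y: "y \<in> closed_segment xk zk"
          have "onorm ((\<lambda>h. JF y *v h) - (\<lambda>h. JF xk *v h)) = mnorm (JF y - JF xk)"
            unfolding mnorm_def by (rule arg_cong[where f=onorm]) (auto simp: fun_eq_iff matrix_vector_mult_diff_rdistrib)
          also have "\<dots> \<le> L2 * norm (y - xk)"
            using JF_lip[of y xk] y seg RX xkX by auto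
          also have "\<dots> \<le> L2 * t"
            using dist_in_closed_segment[OF y] L2_pos unfolding t_def d_def
            by (intro mult_left_mono) (auto simp: dist_norm norm_minus_commute)
          finally show "onorm ((\<lambda>h. JF y *v h) - (\<lambda>h. JF xk *v h)) \<le> L2 * t" .
        qed
        then show ?thesis by (simp add: t_def d_def)
      qed
      define q where "q = F zk - phi + e"
      have q_eq: "q = (F zk - F xk - JF xk *v d) - (B k - JF xk) *v d - mu k *\<^sub>R d + e"
        unfolding q_def phi_eq Gd_eq by (simp add: algebra_simps)
      have nmu: "norm (mu k *\<^sub>R d) = mu k * t" using mu0 by (simp add: t_def)
      have e_le: "norm e \<le> mu k * t"
      proof -
        have "norm e \<le> (rho k * mu k) * t" using en by (simp add: t_def d_def)
        also have "\<dots> \<le> (1 * mu k) * t" using rho1 mu0 t0 by (intro mult_right_mono) auto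
        finally show ?thesis by simp
      qed
      have qn1: "norm q \<le> t*(L2*t) + dlt k * t + mu k * t + mu k * t"
        using tri4[of "F zk - F xk - JF xk *v d" "(B k - JF xk) *v d" "mu k *\<^sub>R d" e]
          taylor dlt_d nmu e_le unfolding q_eq by linarith
      have q2: "t*(L2*t) + dlt k * t + mu k * t + mu k * t \<le> (L2*t + \<delta> + 2*C1* s)*t"
      proof -
        have "dlt k * t \<le> \<delta> * t" using dltd t0 by (rule mult_right_mono)
        moreover have "mu k * t \<le> (C1* s) * t" using muC1 t0 by (rule mult_right_mono)
        moreover have "(L2*t + \<delta> + 2*C1* s)*t = t*(L2*t) + \<delta>*t + (C1* s)*t + (C1* s)*t"
          by (simp add: algebra_simps)
        ultimately show ?thesis by linarith
      qed
      have q3: "(L2*t + \<delta> + 2*C1* s)*t \<le> (L2*(KK* s) + \<delta> + 2*C1* s)*(KK* s)"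
        using tK L2_pos t0 s0 \<delta>0 C1_pos
        by (intro mult_mono add_mono mult_left_mono order_refl) auto
      have q4: "(L2*(KK* s) + \<delta> + 2*C1* s)*(KK* s) = (A* s*KK + \<delta>*KK)* s"
        unfolding A_def by (simp add: algebra_simps)
      have q5: "A* s*KK \<le> A*r*KK" using sr A0 KK1 by (intro mult_right_mono mult_left_mono) auto
      have q6: "(A* s*KK + \<delta>*KK)* s \<le> \<epsilon>0* s"
        using s0 q5 rA \<delta>KK by (intro mult_right_mono) auto
      have qn: "norm q \<le> \<epsilon>0 * s" using qn1 q2 q3 q4 q6 by linarith
      have qnR: "norm q \<le> \<epsilon>0 * R"
      proof -
        have "\<epsilon>0 * s \<le> \<epsilon>0 * R" using sR \<epsilon>00 by (intro mult_left_mono) auto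
        then show ?thesis using qn by linarith
      qed
      have en2: "norm e \<le> rho k * C1 * KK * s^2"
      proof -
        have "norm e \<le> (rho k * mu k) * t" using en by (simp add: t_def d_def)
        also have "\<dots> \<le> (rho k * (C1* s)) * (KK* s)"
          using muC1 tK rho0 mu0 t0 by (intro mult_mono mult_left_mono) auto
        also have "\<dots> = rho k * C1 * KK * s^2" by (simp add: power2_eq_square algebra_simps)
        finally show ?thesis .
      qed
      have Fz: "norm (F zk) \<le> Fm"
      proof -
        have "norm (F zk) \<le> norm (F xstar) + norm (F zk - F xstar)"
          using norm_triangle_ineq[of "F xstar" "F zk - F xstar"] by simp
        also have "norm (F zk - F xstar) \<le> L1 * norm (zk - xstar)" using F_lip[OF zkX X_xstar] .
        also have "\<dots> \<le> L1 * ((KK+1)*R)"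
        proof (intro mult_left_mono)
          have "R \<le> (KK+1)*R" using KK1 R0 by simp
          then show "norm (zk - xstar) \<le> (KK+1)*R" using zsR by linarith
        qed (use L1_pos in auto)
        finally show ?thesis unfolding Fm_def by (simp add: mult.assoc)
      qed
      have mz: "merit \<alpha> F C zk \<le> (norm (F zk) + norm q) * norm e + (norm q)^2 / (2*\<alpha>)"
        apply (rule merit_upper[OF C_ne])
        apply (rule merit_z_bound[OF proj q_def alpha_pos])
        apply assumption+
        done
      have m1: "(norm (F zk) + norm q) * norm e \<le> \<beta>/2 * s^2"
      proof -
        have "(norm (F zk) + norm q) * norm e \<le> (Fm + \<epsilon>0*R) * (rho k * C1 * KK * s^2)"
          using Fz qnR en2 FeR by (intro mult_mono add_mono) auto
        also have "\<dots> = rho k * ((Fm + \<epsilon>0*R) * C1 * KK) * s^2" by (simp add: algebra_simps)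
        also have "\<dots> \<le> \<rho>1 * ((Fm + \<epsilon>0*R) * C1 * KK) * s^2"
          using rho_r1 FeR C1_pos KK1 by (intro mult_right_mono) auto
        also have "\<rho>1 * ((Fm + \<epsilon>0*R) * C1 * KK) = \<beta>/2"
        proof -
          have X0: "(Fm + \<epsilon>0*R) * C1 * KK > 0" using FeR C1_pos KK1 by simp
          have gen: "\<beta>/(2*X)*X = \<beta>/2" if "X > 0" for X :: real using that by (simp add: field_simps)
          have e: "\<rho>1 = \<beta>/(2*((Fm + \<epsilon>0*R) * C1 * KK))" unfolding \<rho>1_def by (simp only: mult.assoc)
          show ?thesis unfolding e by (rule gen[OF X0])
        qed
        finally show ?thesis .
      qed
      have m2: "(norm q)^2 / (2*\<alpha>) \<le> \<beta>/2 * s^2"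
      proof -
        have "(norm q)^2 \<le> (\<epsilon>0 * s)^2" using qn by (intro power_mono) auto
        then have "(norm q)^2 / (2*\<alpha>) \<le> (\<epsilon>0 * s)^2 / (2*\<alpha>)" using alpha_pos
          by (intro divide_right_mono) auto
        also have "\<dots> = \<beta>/2 * s^2" using \<epsilon>0sq alpha_pos by (simp add: power_mult_distrib field_simps)
        finally show ?thesis .
      qed
      have mx: "(\<mu> - \<alpha>/2) * s^2 \<le> merit \<alpha> F C xk"
      proof -
        have l: "- (F xk \<bullet> (xstar - xk)) - \<alpha> / 2 * (norm (xstar - xk))\<^sup>2 \<le> merit \<alpha> F C xk"
          by (rule merit_lower[OF xsC alpha_pos])
        have sm: "(F xk - F xstar) \<bullet> (xk - xstar) \<ge> \<mu> * (norm (xk - xstar))\<^sup>2"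
          using F_smon xkC xsC unfolding strongly_monotone_on_def by blast
        have sv: "F xstar \<bullet> (xk - xstar) \<ge> 0" using sol xkC unfolding vip_sol_def by blast
        have "- (F xk \<bullet> (xstar - xk)) = (F xk - F xstar) \<bullet> (xk - xstar) + F xstar \<bullet> (xk - xstar)"
          by (simp add: inner_diff_left inner_diff_right)
        moreover have "norm (xstar - xk) = s" by (simp add: s_def v_def norm_minus_commute)
        ultimately show ?thesis using l sm sv unfolding s_def v_def by (simp add: algebra_simps)
      qed
      have mx2: "\<beta> * s^2 \<le> \<gamma> * merit \<alpha> F C xk"
      proof -
        have "\<gamma> * ((\<mu> - \<alpha>/2) * s^2) \<le> \<gamma> * merit \<alpha> F C xk"
          using mx gamma_pos by (intro mult_left_mono) auto
        then show ?thesis unfolding \<beta>_def by (simp add: mult.assoc)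
      qed
      show "merit \<alpha> F C (z k) \<le> \<gamma> * merit \<alpha> F C (x k)"
        using mz m1 m2 mx2 unfolding zk_def xk_def by linarith
    qed
  qed
qed

end
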